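(* Let $K\ge1$ be an integer and $m>0$. For $x>0$ define $$g_{\mathbf 0}(x)=\int_{\{(t_1,\dots,t_K)\in[0,\infty)^K:\ \prod_{k=1}^K(1+t_k)\le x\}}\prod_{k=1}^K t_k^{m-1}\,dt_1\cdots dt_K .$$ Then $\mathcal R\mapsto g_{\mathbf 0}(2^{\mathcal R})$ is a monotonically increasing function of $\mathcal R>0$, it is convex in $\mathcal R$ whenever $m\ge1$, and consequently $C(\mathcal R)=\big(g_{\mathbf 0}(2^{\mathcal R})\big)^{-1/(mK)}$ is a monotonically decreasing function of $\mathcal R>0$. *)

theory Defs
  imports "HOL-Analysis.Analysis"
begin

definition g0 :: "nat \<Rightarrow> real \<Rightarrow> real \<Rightarrow> real" where
  "g0 K m x =
     (\<integral>t. indicator {t. (\<forall>k<K. 0 \<le> t k) \<and> (\<Prod>k<K. 1 + t k) \<le> x} t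
            * (\<Prod>k<K. t k powr (m - 1)) \<partial>(\<Pi>\<^sub>M k\<in>{..<K}. lborel))"

end

theory Submission
  imports Defs
begin

interpretation LP: product_sigma_finite "\<lambda>_::nat. lborel :: real measure"
  by standard

definition psi :: "real \<Rightarrow> real \<Rightarrow> real" where
  "psi m y = max (y - 1) 0 powr m / m"

definition Wt :: "nat \<Rightarrow> real \<Rightarrow> (nat \<Rightarrow> real) \<Rightarrow> real" where
  "Wt n m t = (\<Prod>k<n. indicator {0..} (t k) * t k powr (m - 1))"

definition Pt :: "nat \<Rightarrow> (nat \<Rightarrow> real) \<Rightarrow> real" where
  "Pt n t = (\<Prod>k<n. 1 + t k)"

lemma meas_f [measurable]:
  fixes K :: nat and x m :: real
  shows "(\<lambda>t. indicator {t. (\<forall>k<K. 0 \<le> t k) \<and> (\<Prod>k<K. 1 + t k) \<le> x} t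
            * (\<Prod>k<K. t k powr (m - 1))) \<in> borel_measurable (\<Pi>\<^sub>M k\<in>{..<K}. lborel)"
proof -
  have "{t. (\<forall>k<K. 0 \<le> t k) \<and> (\<Prod>k<K. 1 + t k) \<le> x} \<inter> space (\<Pi>\<^sub>M k\<in>{..<K}. (lborel::real measure))
     = {t. (\<forall>k\<in>{..<K}. 0 \<le> t k)} \<inter> {t. (\<Prod>k<K. 1 + t k) \<le> x} \<inter> space (\<Pi>\<^sub>M k\<in>{..<K}. (lborel::real measure))"
    by auto
  also have "\<dots> \<in> sets (\<Pi>\<^sub>M k\<in>{..<K}. lborel)"
    by measurable
  finally have [measurable]: "{t. (\<forall>k<K. 0 \<le> t k) \<and> (\<Prod>k<K. 1 + t k) \<le> x} \<inter> space (\<Pi>\<^sub>M k\<in>{..<K}. (lborel::real measure))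
     \<in> sets (\<Pi>\<^sub>M k\<in>{..<K}. lborel)" .
  show ?thesis by measurable
qed

lemma F1:
  fixes c m :: real assumes "c \<ge> 0" "m > 0"
  shows "has_bochner_integral lborel (\<lambda>y. indicator {0..c} y * y powr (m-1)) (c powr m / m)"
proof -
  have hi: "((\<lambda>x. x powr (m-1)) has_integral (c powr m / m)) {0..c}"
    using has_integral_powr_from_0[of "m-1" c] assms by simp
  have "integral\<^sup>N lborel (\<lambda>x. indicator {0..c} x * x powr (m-1)) = c powr m / m"
    by (rule nn_integral_has_integral_lebesgue[OF _ hi]) simp
  then show ?thesis using assms
    by (intro has_bochner_integral_nn_integral) auto
qed

lemma factor_le_prod:
  fixes t :: "nat \<Rightarrow> real"
  assumes "\<forall>k<n. 0 \<le> t k" "j < n"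
  shows "1 + t j \<le> (\<Prod>k<n. 1 + t k)"
proof -
  have "(\<Prod>k<n. 1 + t k) = (1 + t j) * (\<Prod>k\<in>{..<n}-{j}. 1 + t k)"
    using assms by (subst prod.remove[of _ j]) auto
  moreover have "1 \<le> (\<Prod>k\<in>{..<n}-{j}. 1 + t k)"
    using assms by (intro prod_ge_1) auto
  moreover have "0 \<le> 1 + t j" using assms by auto
  ultimately show ?thesis
    by (metis mult_le_cancel_left1 not_less order_less_le_trans zero_less_one)
qed

lemma Pt_ge1: "\<forall>k<n. 0 \<le> t k \<Longrightarrow> 1 \<le> Pt n t"
  unfolding Pt_def by (intro prod_ge_1) auto

lemma Wt_nonneg: "0 \<le> Wt n m t"
  unfolding Wt_def by (intro prod_nonneg) (auto simp: indicator_def)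

lemma Wt_zero: "\<not> (\<forall>k<n. 0 \<le> t k) \<Longrightarrow> Wt n m t = 0"
  unfolding Wt_def by (auto simp: indicator_def intro!: prod_zero)

lemma psi_nonneg: "m > 0 \<Longrightarrow> 0 \<le> psi m y"
  unfolding psi_def by simp

lemma psi_mono: "m > 0 \<Longrightarrow> y1 \<le> y2 \<Longrightarrow> psi m y1 \<le> psi m y2"
  unfolding psi_def by (intro divide_right_mono powr_mono2) auto

lemma upd_eq:
  fixes t :: "nat \<Rightarrow> real" and x m y :: real
  assumes "m > 0"
  shows "indicator {t. (\<forall>k<Suc n. 0 \<le> t k) \<and> (\<Prod>k<Suc n. 1 + t k) \<le> x} (t(n:=y))
            * (\<Prod>k<Suc n. (t(n:=y)) k powr (m - 1))
       = Wt n m t * (indicator {0..max (x / Pt n t - 1) 0} y * y powr (m-1))"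
proof (cases "\<forall>k<n. 0 \<le> t k")
  case False
  then show ?thesis by (auto simp: Wt_zero indicator_def)
next
  case True
  have P1: "1 \<le> Pt n t" using Pt_ge1[OF True] .
  have e1: "(\<Prod>k<Suc n. 1 + (t(n:=y)) k) = (1 + y) * Pt n t"
    unfolding Pt_def by (simp add: lessThan_Suc)
  have e2: "(\<Prod>k<Suc n. (t(n:=y)) k powr (m - 1)) = y powr (m-1) * (\<Prod>k<n. t k powr (m - 1))"
    by (simp add: lessThan_Suc)
  have W: "Wt n m t = (\<Prod>k<n. t k powr (m - 1))"
    unfolding Wt_def using True by (intro prod.cong) (auto simp: indicator_def)
  have iff: "(1 + y) * Pt n t \<le> x \<longleftrightarrow> y \<le> x / Pt n t - 1"
    using P1 by (simp add: field_simps)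
  show ?thesis
  proof (cases "y < 0")
    case True then show ?thesis by (auto simp: indicator_def)
  next
    case False
    have all: "(\<forall>k<Suc n. 0 \<le> (t(n:=y)) k) = True" using False True by (auto simp: less_Suc_eq)
    show ?thesis
    proof (cases "y \<le> x / Pt n t - 1")
      case True2: True
      have "(\<forall>k<Suc n. 0 \<le> (t(n:=y)) k) \<and> (\<Prod>k<Suc n. 1 + (t(n:=y)) k) \<le> x"
        unfolding e1 using all iff True2 by simp
      then show ?thesis using False True2
        by (simp add: e2 W indicator_def mult.commute)
    next
      case False2: False
      have "\<not> ((\<forall>k<Suc n. 0 \<le> (t(n:=y)) k) \<and> (\<Prod>k<Suc n. 1 + (t(n:=y)) k) \<le> x)"
        unfolding e1 using all iff False2 by simp
      then have n1: "t(n:=y) \<notin> {t. (\<forall>k<Suc n. 0 \<le> t k) \<and> (\<Prod>k<Suc n. 1 + t k) \<le> x}" by simp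
      have "y \<le> max (x / Pt n t - 1) 0 \<Longrightarrow> y = 0" using False False2 by linarith
      then show ?thesis unfolding indicator_simps(2)[OF n1]
        by (cases "y \<in> {0..max (x / Pt n t - 1) 0}") (auto simp: indicator_def)
    qed
  qed
qed

lemma integrable_f:
  fixes K :: nat and x m :: real
  assumes "m > 0"
  shows "integrable (\<Pi>\<^sub>M k\<in>{..<K}. lborel) (\<lambda>t. indicator {t. (\<forall>k<K. 0 \<le> t k) \<and> (\<Prod>k<K. 1 + t k) \<le> x} t
            * (\<Prod>k<K. t k powr (m - 1)))"
proof -
  have "integrable (\<Pi>\<^sub>M k\<in>{..<K}. lborel) (\<lambda>t. \<Prod>k\<in>{..<K}. (\<lambda>s. indicator {0..\<bar>x\<bar>} s * s powr (m-1)) (t k))"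
    by (rule LP.product_integrable_prod) (auto intro: integrable.intros[OF F1] assms)
  note ib = Bochner_Integration.integrable_bound[OF this]
  show ?thesis
  proof (rule ib)
    show "AE t in (\<Pi>\<^sub>M k\<in>{..<K}. lborel). norm (indicator {t. (\<forall>k<K. 0 \<le> t k) \<and> (\<Prod>k<K. 1 + t k) \<le> x} t
            * (\<Prod>k<K. t k powr (m - 1))) \<le> norm (\<Prod>k\<in>{..<K}. (\<lambda>s. indicator {0..\<bar>x\<bar>} s * s powr (m-1)) (t k))"
    proof (rule AE_I2)
      fix t :: "nat \<Rightarrow> real"
      show "norm (indicator {t. (\<forall>k<K. 0 \<le> t k) \<and> (\<Prod>k<K. 1 + t k) \<le> x} t
            * (\<Prod>k<K. t k powr (m - 1))) \<le> norm (\<Prod>k\<in>{..<K}. (\<lambda>s. indicator {0..\<bar>x\<bar>} s * s powr (m-1)) (t k))"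
      proof (cases "(\<forall>k<K. 0 \<le> t k) \<and> (\<Prod>k<K. 1 + t k) \<le> x")
        case True
        have "(\<Prod>k\<in>{..<K}. (\<lambda>s. indicator {0..\<bar>x\<bar>} s * s powr (m-1)) (t k)) = (\<Prod>k<K. t k powr (m - 1))"
        proof (intro prod.cong refl)
          fix k assume k: "k \<in> {..<K}"
          have "1 + t k \<le> (\<Prod>k<K. 1 + t k)" using factor_le_prod[of K t k] True k by auto
          then have "t k \<in> {0..\<bar>x\<bar>}" using True k by auto
          then show "indicator {0..\<bar>x\<bar>} (t k) * t k powr (m - 1) = t k powr (m - 1)" by simp
        qed
        then show ?thesis using True by simp
      next
        case False
        then have "t \<notin> {t. (\<forall>k<K. 0 \<le> t k) \<and> (\<Prod>k<K. 1 + t k) \<le> x}" by simp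
        then show ?thesis by simp
      qed
    qed
  qed measurable
qed

lemma split_g0:
  fixes n :: nat and x m :: real
  assumes "m > 0"
  shows "g0 (Suc n) m x = (\<integral>t. Wt n m t * psi m (x / Pt n t) \<partial>(\<Pi>\<^sub>M k\<in>{..<n}. lborel))"
proof -
  let ?F = "\<lambda>t. indicator {t. (\<forall>k<Suc n. 0 \<le> t k) \<and> (\<Prod>k<Suc n. 1 + t k) \<le> x} t
            * (\<Prod>k<Suc n. t k powr (m - 1))"
  have eq: "(\<Pi>\<^sub>M k\<in>{..<Suc n}. lborel) = (\<Pi>\<^sub>M k\<in>insert n {..<n}. (lborel::real measure))"
    by (simp add: lessThan_Suc)
  have int: "integrable (\<Pi>\<^sub>M k\<in>insert n {..<n}. lborel) ?F"
    using integrable_f[OF assms, of "Suc n" x] unfolding eq .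
  have "g0 (Suc n) m x = integral\<^sup>L (\<Pi>\<^sub>M k\<in>insert n {..<n}. lborel) ?F"
    unfolding g0_def eq ..
  also have "\<dots> = (\<integral>t. (\<integral>y. ?F (t(n:=y)) \<partial>lborel) \<partial>(\<Pi>\<^sub>M k\<in>{..<n}. lborel))"
    by (rule LP.product_integral_insert[OF _ _ int]) auto
  also have "\<dots> = (\<integral>t. Wt n m t * psi m (x / Pt n t) \<partial>(\<Pi>\<^sub>M k\<in>{..<n}. lborel))"
  proof (rule Bochner_Integration.integral_cong[OF refl])
    fix t :: "nat \<Rightarrow> real"
    have "(\<integral>y. ?F (t(n:=y)) \<partial>lborel)
        = (\<integral>y. Wt n m t * (indicator {0..max (x / Pt n t - 1) 0} y * y powr (m-1)) \<partial>lborel)"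
      by (simp only: upd_eq[OF assms])
    also have "\<dots> = Wt n m t * (max (x / Pt n t - 1) 0 powr m / m)"
      using has_bochner_integral_integral_eq[OF F1[OF _ assms, of "max (x / Pt n t - 1) 0"]] by simp
    finally show "(\<integral>y. ?F (t(n:=y)) \<partial>lborel) = Wt n m t * psi m (x / Pt n t)"
      by (simp add: psi_def)
  qed
  finally show ?thesis .
qed

lemma meas_Phi [measurable]:
  "(\<lambda>t. Wt n m t * psi m (x / Pt n t)) \<in> borel_measurable (\<Pi>\<^sub>M k\<in>{..<n}. lborel)"
  unfolding Wt_def Pt_def psi_def by measurable

lemma Phi_nonneg: "m > 0 \<Longrightarrow> 0 \<le> Wt n m t * psi m y"
  using Wt_nonneg psi_nonneg by simp

lemma psi_pos_imp: "m > 0 \<Longrightarrow> psi m y \<noteq> 0 \<Longrightarrow> y > 1"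
  unfolding psi_def by (cases "y > 1") auto

lemma integrable_Phi:
  fixes n :: nat and x m :: real
  assumes "m > 0" "x > 0"
  shows "integrable (\<Pi>\<^sub>M k\<in>{..<n}. lborel) (\<lambda>t. Wt n m t * psi m (x / Pt n t))"
proof -
  have "integrable (\<Pi>\<^sub>M k\<in>{..<n}. lborel) (\<lambda>t. \<Prod>k\<in>{..<n}. (\<lambda>s. indicator {0..x} s * s powr (m-1)) (t k))"
    using assms by (intro LP.product_integrable_prod) (auto intro: integrable.intros[OF F1])
  then have "integrable (\<Pi>\<^sub>M k\<in>{..<n}. lborel) (\<lambda>t. psi m x * (\<Prod>k\<in>{..<n}. (\<lambda>s. indicator {0..x} s * s powr (m-1)) (t k)))"
    by (intro integrable_mult_right)
  note ib = Bochner_Integration.integrable_bound[OF this]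
  show ?thesis
  proof (rule ib)
    show "AE t in (\<Pi>\<^sub>M k\<in>{..<n}. lborel). norm (Wt n m t * psi m (x / Pt n t))
       \<le> norm (psi m x * (\<Prod>k\<in>{..<n}. (\<lambda>s. indicator {0..x} s * s powr (m-1)) (t k)))"
    proof (rule AE_I2)
      fix t :: "nat \<Rightarrow> real"
      have B0: "0 \<le> psi m x * (\<Prod>k\<in>{..<n}. (\<lambda>s. indicator {0..x} s * s powr (m-1)) (t k))"
        using assms by (intro mult_nonneg_nonneg psi_nonneg prod_nonneg) auto
      show "norm (Wt n m t * psi m (x / Pt n t))
       \<le> norm (psi m x * (\<Prod>k\<in>{..<n}. (\<lambda>s. indicator {0..x} s * s powr (m-1)) (t k)))"
      proof (cases "(\<forall>k<n. 0 \<le> t k) \<and> psi m (x / Pt n t) \<noteq> 0")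
        case False
        then have "Wt n m t * psi m (x / Pt n t) = 0" using Wt_zero by auto
        then show ?thesis using B0 by (simp only: norm_zero) simp
      next
        case True
        have P1: "1 \<le> Pt n t" using Pt_ge1 True by auto
        have "x / Pt n t > 1" using psi_pos_imp True assms by auto
        then have Px: "Pt n t < x" using P1 by (simp add: field_simps)
        have W: "Wt n m t = (\<Prod>k\<in>{..<n}. (\<lambda>s. indicator {0..x} s * s powr (m-1)) (t k))"
          unfolding Wt_def
        proof (intro prod.cong refl)
          fix k assume k: "k \<in> {..<n}"
          have "1 + t k \<le> Pt n t" using factor_le_prod[of n t k] True k by (auto simp: Pt_def)
          then have "t k \<in> {0..x}" using True k Px by auto
          then show "indicator {0..} (t k) * t k powr (m - 1) = indicator {0..x} (t k) * t k powr (m - 1)"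
            by simp
        qed
        have "x / Pt n t \<le> x" using P1 assms by (simp add: field_simps mult_le_cancel_left1)
        then have "psi m (x / Pt n t) \<le> psi m x" using psi_mono assms by auto
        then have "Wt n m t * psi m (x / Pt n t) \<le> Wt n m t * psi m x"
          using Wt_nonneg by (intro mult_left_mono) auto
        moreover have "norm (Wt n m t * psi m (x / Pt n t)) = Wt n m t * psi m (x / Pt n t)"
          using Phi_nonneg[OF assms(1)] by simp
        moreover have "Wt n m t * psi m x = norm (psi m x * (\<Prod>k\<in>{..<n}. (\<lambda>s. indicator {0..x} s * s powr (m-1)) (t k)))"
          using B0 W by (simp add: mult.commute)
        ultimately show ?thesis by linarith
      qed
    qed
  qed measurable
qed

lemma pos_Phi:
  fixes n :: nat and x m :: real
  assumes "m > 0" "x > 1"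
  shows "0 < (\<integral>t. Wt n m t * psi m (x / Pt n t) \<partial>(\<Pi>\<^sub>M k\<in>{..<n}. lborel))"
proof -
  let ?M = "(\<Pi>\<^sub>M k\<in>{..<n}. (lborel::real measure))"
  define \<delta> where "\<delta> = x powr (1 / (real n + 1)) - 1"
  have d0: "\<delta> > 0" unfolding \<delta>_def using assms by (simp add: gr_one_powr)
  have "(1 + \<delta>) ^ n = (x powr (1 / (real n + 1))) powr real n"
    unfolding \<delta>_def using assms by (subst powr_realpow) auto
  also have "\<dots> = x powr (real n / (real n + 1))"
    using powr_powr[of x "1 / (real n + 1)" "real n"] by simp
  also have "\<dots> < x powr 1"
    by (rule powr_less_mono) (use assms in \<open>auto simp: divide_less_eq\<close>)
  finally have dn: "(1 + \<delta>) ^ n < x" using assms by simp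
  define B where "B = Pi\<^sub>E {..<n} (\<lambda>_. {0<..<\<delta>})"
  have posB: "0 < Wt n m t * psi m (x / Pt n t)" if t: "t \<in> B" for t
  proof -
    have tk: "0 < t k \<and> t k < \<delta>" if "k < n" for k using PiE_mem[OF t[unfolded B_def], of k] that by simp
    have tk0: "0 < t k" if "k < n" for k using tk that by blast
    have "0 < indicator {0..} (t k) * t k powr (m - 1)" if "k < n" for k
      using tk0[OF that] by (simp add: indicator_def)
    then have "0 < Wt n m t" unfolding Wt_def by (intro prod_pos) simp
    have "Pt n t \<le> (\<Prod>k<n. 1 + \<delta>)" unfolding Pt_def using tk
      by (intro prod_mono) (auto simp: less_imp_le)
    then have "Pt n t < x" using dn by simp
    moreover have "1 \<le> Pt n t" using Pt_ge1[of n t] tk0 by (auto simp: less_imp_le)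
    ultimately have "x / Pt n t > 1" by (simp add: field_simps)
    then have mx: "max (x / Pt n t - 1) 0 = x / Pt n t - 1" "x / Pt n t - 1 \<noteq> 0" by auto
    have "0 < psi m (x / Pt n t)" unfolding psi_def mx(1)
      by (rule divide_pos_pos) (use mx(2) assms in \<open>simp_all\<close>)
    with \<open>0 < Wt n m t\<close> show ?thesis by simp
  qed
  have int: "integrable ?M (\<lambda>t. Wt n m t * psi m (x / Pt n t))"
    using integrable_Phi[of m x n] assms by simp
  have nn: "0 \<le> (\<integral>t. Wt n m t * psi m (x / Pt n t) \<partial>?M)"
    by (intro Bochner_Integration.integral_nonneg) (simp add: Phi_nonneg assms)
  have "(\<integral>t. Wt n m t * psi m (x / Pt n t) \<partial>?M) \<noteq> 0"
  proof
    assume "(\<integral>t. Wt n m t * psi m (x / Pt n t) \<partial>?M) = 0"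
    then have "AE t in ?M. Wt n m t * psi m (x / Pt n t) = 0"
      using integral_nonneg_eq_0_iff_AE[OF int] Phi_nonneg assms by auto
    then have "AE t in ?M. \<not> t \<in> B"
      by eventually_elim (auto dest: posB)
    then have e0: "emeasure ?M {t \<in> space ?M. t \<in> B} = 0" by (rule emeasure_eq_0_AE)
    have eB: "{t \<in> space ?M. t \<in> B} = B" by (auto simp: B_def space_PiM)
    have eP: "emeasure ?M B = (\<Prod>k<n. emeasure lborel {0<..<\<delta>})"
      unfolding B_def by (rule LP.emeasure_PiM) auto
    have pc: "(\<Prod>k<n. emeasure lborel {0<..<\<delta>}) = ennreal \<delta> ^ n"
      using d0 by simp
    have "ennreal \<delta> ^ n = 0" using e0 unfolding eB eP pc .
    then show False using d0 by (simp add: power_eq_0_iff)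
  qed
  then show ?thesis using nn by linarith
qed



lemma exp2_convex: "convex_on UNIV (\<lambda>x::real. 2 powr x)"
  by (intro f''_ge0_imp_convex derivative_eq_intros | simp)+

lemma powr_conv0:
  fixes m aa bb u :: real
  assumes "m \<ge> 1" "aa \<ge> 0" "bb \<ge> 0" "0 \<le> u" "u \<le> 1"
  shows "((1-u)*aa + u*bb) powr m \<le> (1-u) * aa powr m + u * bb powr m"
proof -
  have key: "(v * w) powr m \<le> v * w powr m" if "0 \<le> v" "v \<le> 1" "0 \<le> w" for v w :: real
  proof -
    have "v powr m \<le> v powr 1" using powr_mono'[of 1 m v] assms that by simp
    then have "v powr m \<le> v" using that by simp
    then have "v powr m * w powr m \<le> v * w powr m" by (intro mult_right_mono) auto
    then show ?thesis using that by (simp add: powr_mult)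
  qed
  show ?thesis
  proof (cases "aa = 0")
    case True
    then show ?thesis using key[of u bb] assms by simp
  next
    case aa: False
    show ?thesis
    proof (cases "bb = 0")
      case True
      then show ?thesis using key[of "1-u" aa] assms by simp
    next
      case False
      then show ?thesis
        using convex_onD[OF powr_convex[OF assms(1)], of u aa bb] aa assms by simp
    qed
  qed
qed

lemma psi_conv:
  fixes m p u a b :: real
  assumes "m \<ge> 1" "p > 0" "0 \<le> u" "u \<le> 1"
  shows "psi m (2 powr ((1-u)*a + u*b) / p) \<le> (1-u) * psi m (2 powr a / p) + u * psi m (2 powr b / p)"
proof -
  define A where "A r = max (2 powr r / p - 1) 0" for r
  have c: "2 powr ((1-u)*a+u*b) \<le> (1-u)*2 powr a + u * 2 powr b"
    using convex_onD[OF exp2_convex, of u a b] assms by simp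
  have "2 powr ((1-u)*a+u*b) / p - 1 \<le> ((1-u)*2 powr a + u * 2 powr b) / p - 1"
    using c assms by (simp add: divide_right_mono)
  also have "\<dots> = (1-u)*(2 powr a / p - 1) + u*(2 powr b / p - 1)"
    using assms by (simp add: field_simps)
  also have "\<dots> \<le> (1-u) * A a + u * A b"
    unfolding A_def using assms by (intro add_mono mult_left_mono) auto
  finally have A1: "A ((1-u)*a+u*b) \<le> (1-u) * A a + u * A b"
    using assms unfolding A_def by (auto intro: add_nonneg_nonneg mult_nonneg_nonneg)
  have "A ((1-u)*a+u*b) powr m \<le> ((1-u) * A a + u * A b) powr m"
    using A1 assms by (intro powr_mono2) (auto simp: A_def)
  also have "\<dots> \<le> (1-u) * A a powr m + u * A b powr m"
    using assms by (intro powr_conv0) (auto simp: A_def)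
  finally have "A ((1-u)*a+u*b) powr m / m \<le> ((1-u) * A a powr m + u * A b powr m) / m"
    using assms by (intro divide_right_mono) auto
  then show ?thesis unfolding psi_def A_def by (simp add: add_divide_distrib)
qed


theorem lemma4:
  fixes K :: nat and m :: real
  assumes "K \<ge> 1" and "m > 0"
  shows "mono_on {0<..} (\<lambda>R. g0 K m (2 powr R))
    \<and> (m \<ge> 1 \<longrightarrow> convex_on {0<..} (\<lambda>R. g0 K m (2 powr R)))
    \<and> antimono_on {0<..} (\<lambda>R. (g0 K m (2 powr R)) powr (- 1 / (m * real K)))"
proof -
  obtain n where K: "K = Suc n" using assms(1) by (cases K) auto
  let ?M = "(\<Pi>\<^sub>M k\<in>{..<n}. (lborel::real measure))"
  define G where "G R = (\<integral>t. Wt n m t * psi m (2 powr R / Pt n t) \<partial>?M)" for R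
  have gG: "g0 K m (2 powr R) = G R" for R
    unfolding K G_def by (rule split_g0[OF assms(2)])
  have intR: "integrable ?M (\<lambda>t. Wt n m t * psi m (2 powr R / Pt n t))" for R
    using integrable_Phi[OF assms(2), of "2 powr R" n] by simp
  have ptw_mono: "Wt n m t * psi m (2 powr R1 / Pt n t) \<le> Wt n m t * psi m (2 powr R2 / Pt n t)"
    if "R1 \<le> R2" for R1 R2 t
  proof (cases "\<forall>k<n. 0 \<le> t k")
    case True
    then have P: "Pt n t > 0" using Pt_ge1[of n t] by simp
    have "2 powr R1 \<le> 2 powr R2" using that by simp
    then have "2 powr R1 / Pt n t \<le> 2 powr R2 / Pt n t" using P by (simp add: divide_right_mono)
    then show ?thesis using psi_mono[OF assms(2)] Wt_nonneg by (intro mult_left_mono) auto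
  next
    case False then show ?thesis by (simp add: Wt_zero)
  qed
  have monoG: "G R1 \<le> G R2" if "R1 \<le> R2" for R1 R2
    unfolding G_def by (rule integral_mono[OF intR intR ptw_mono[OF that]])
  have posG: "G R > 0" if "R > 0" for R
  proof -
    have "2 powr 0 < 2 powr R" using that by (intro powr_less_mono) auto
    then have "1 < (2::real) powr R" by simp
    then show ?thesis unfolding G_def by (rule pos_Phi[OF assms(2)])
  qed
  have P1: "mono_on {0<..} (\<lambda>R. g0 K m (2 powr R))"
    by (rule mono_onI) (simp add: gG monoG)
  have P3: "antimono_on {0<..} (\<lambda>R. (g0 K m (2 powr R)) powr (- 1 / (m * real K)))"
  proof (rule monotone_onI)
    fix r s :: real assume "r \<in> {0<..}" "s \<in> {0<..}" "r \<le> s"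
    then have "0 < G r" "G r \<le> G s" using posG monoG by auto
    moreover have "- 1 / (m * real K) \<le> 0" using assms by (simp add: divide_nonpos_pos)
    ultimately show "(g0 K m (2 powr s)) powr (- 1 / (m * real K)) \<le> (g0 K m (2 powr r)) powr (- 1 / (m * real K))"
      unfolding gG by (intro powr_mono2')
  qed
  have P2: "convex_on {0<..} (\<lambda>R. g0 K m (2 powr R))" if m1: "m \<ge> 1"
  proof (rule convex_onI)
    show "convex ({0<..} :: real set)" by (rule convex_real_interval)
    fix u x y :: real assume u: "u > 0" "u < 1"
    have ptw: "Wt n m t * psi m (2 powr ((1-u)*x + u*y) / Pt n t)
       \<le> (1-u) * (Wt n m t * psi m (2 powr x / Pt n t)) + u * (Wt n m t * psi m (2 powr y / Pt n t))" for t
    proof (cases "\<forall>k<n. 0 \<le> t k")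
      case True
      then have P: "Pt n t > 0" using Pt_ge1[of n t] by simp
      have "Wt n m t * psi m (2 powr ((1-u)*x + u*y) / Pt n t)
          \<le> Wt n m t * ((1-u) * psi m (2 powr x / Pt n t) + u * psi m (2 powr y / Pt n t))"
        using psi_conv[OF m1 P, of u x y] u Wt_nonneg by (intro mult_left_mono) auto
      then show ?thesis by (simp add: algebra_simps)
    next
      case False then show ?thesis by (simp add: Wt_zero)
    qed
    have "G ((1-u)*x + u*y) \<le> (\<integral>t. (1-u) * (Wt n m t * psi m (2 powr x / Pt n t)) + u * (Wt n m t * psi m (2 powr y / Pt n t)) \<partial>?M)"
      unfolding G_def using intR by (intro integral_mono ptw) auto
    also have "\<dots> = (1-u) * G x + u * G y"
      unfolding G_def using intR by (simp add: Bochner_Integration.integral_add integral_mult_right_zero)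
    finally show "g0 K m (2 powr ((1 - u) *\<^sub>R x + u *\<^sub>R y)) \<le> (1 - u) * g0 K m (2 powr x) + u * g0 K m (2 powr y)"
      by (simp add: gG)
  qed
  show ?thesis using P1 P2 P3 by blast
qed

end
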